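(* In the power control setting described in the context, for every $i\in\mathcal{K}$, $u_i(\tilde{\underline{p}})\ge u_i(\underline{p}^* )$, where $\underline{p}^*=(p_1^*,\dots,p_K^* )$.
   Context: There are $K\ge2$ transmitters $i\in\mathcal{K}=\{1,\dots,K\}$; $\sigma^2>0$ is the noise variance; transmitter $i$ has channel gain $g_i$ with $|g_i|^2>0$, rate $R_i>0$, and power $p_i\in[0,P_i^{\max}]$. For a power profile $\underline{p}$, $\mathrm{SINR}_i=\frac{p_i|g_i|^2}{\sum_{j\neq i}p_j|g_j|^2+\sigma^2}$ and $u_i(\underline{p})=\frac{R_i f(\mathrm{SINR}_i)}{p_i}$, where $f$ is a common sigmoidal efficiency function with $f(0)=0$. Let $\beta^*$ be the unique positive solution of $xf'(x)-f(x)=0$, assumed to satisfy $(K-1)\beta^*<1$; the one-shot Nash equilibrium is $p_i^*=\frac{\sigma^2}{|g_i|^2}\frac{\beta^*}{1-(K-1)\beta^*}$ (all users get SINR $\beta^*$). It is assumed that there exists $x_0\in]0,\frac1{K-1}[$ such that $\frac{f''(x)}{f'(x)}-\frac{2(K-1)}{1-(K-1)x}$ is strictly positive on $]0,x_0[$ and strictly negative on $]x_0,\frac1{K-1}[$; then $\tilde\gamma$ is the unique solution in $]0,\frac1{K-1}[$ of $x[1-(K-1)x]f'(x)-f(x)=0$, and the operating point is $\tilde p_i=\frac{\sigma^2}{|g_i|^2}\frac{\tilde\gamma}{1-(K-1)\tilde\gamma}$ (all users get SINR $\tilde\gamma$). The maximal powers are large enough that $p_i^*,\tilde p_i\le P_i^{\max}$.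 *)

theory Defs
  imports "HOL-Analysis.Analysis"
begin

definition sigmoidal :: "(real \<Rightarrow> real) \<Rightarrow> (real \<Rightarrow> real) \<Rightarrow> (real \<Rightarrow> real) \<Rightarrow> bool" where
  "sigmoidal f f' f'' \<longleftrightarrow>
     f 0 = 0 \<and> continuous_on {0..} f \<and>
     (\<forall>x>0. (f has_real_derivative f' x) (at x) \<and> (f' has_real_derivative f'' x) (at x)) \<and>
     (\<forall>x>0. f' x > 0) \<and>
     (\<exists>a>0. (\<forall>x\<in>{0<..<a}. f'' x > 0) \<and> (\<forall>x>a. f'' x < 0)) \<and>
     (f \<longlongrightarrow> 1) at_top"

text \<open>Users are indexed by {1..K}; g i is the complex channel gain, s2 the noise variance.\<close>
definition SINR :: "nat \<Rightarrow> real \<Rightarrow> (nat \<Rightarrow> complex) \<Rightarrow> (nat \<Rightarrow> real) \<Rightarrow> nat \<Rightarrow> real" where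
  "SINR K s2 g p i =
     p i * (cmod (g i))\<^sup>2 / ((\<Sum>j\<in>{1..K} - {i}. p j * (cmod (g j))\<^sup>2) + s2)"

definition utility :: "nat \<Rightarrow> real \<Rightarrow> (nat \<Rightarrow> complex) \<Rightarrow> (nat \<Rightarrow> real) \<Rightarrow> (real \<Rightarrow> real)
    \<Rightarrow> (nat \<Rightarrow> real) \<Rightarrow> nat \<Rightarrow> real" where
  "utility K s2 g R f p i = R i * f (SINR K s2 g p i) / p i"

end

theory Submission
  imports Defs
begin

lemma phi_deriv:
  fixes k :: real
  assumes "(f has_real_derivative f' x) (at x)" "(f' has_real_derivative f'' x) (at x)"
  shows "((\<lambda>x. x*(1-k*x)*f' x - f x) has_real_derivative
           (x*(1-k*x)*f'' x - 2*k*x*f' x)) (at x)"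
proof -
  have "((\<lambda>x. x*(1-k*x)*f' x - f x) has_real_derivative
           ((1*(1-k*x) + x*(0-k*1))*f' x + x*(1-k*x)*f'' x - f' x)) (at x)"
    by (rule derivative_eq_intros refl assms | simp)+
  moreover have eq: "(1*(1-k*x) + x*(0-k*1))*f' x + x*(1-k*x)*f'' x - f' x
      = x*(1-k*x)*f'' x - 2*k*x*f' x" by (simp add: algebra_simps)
  ultimately show ?thesis by (simp only: eq)
qed

lemma h_deriv:
  fixes k :: real
  assumes "(f has_real_derivative f' x) (at x)" "x \<noteq> 0"
  shows "((\<lambda>x. f x*(1-k*x)/x) has_real_derivative
           ((x*(1-k*x)*f' x - f x)/x^2)) (at x)"
proof -
  have "((\<lambda>x. f x*(1-k*x)/x) has_real_derivative
           ((f' x*(1-k*x) + f x*(0-k*1))*x - f x*(1-k*x)*1)/(x*x)) (at x)"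
    by (rule derivative_eq_intros refl assms | simp add: assms)+
  moreover have "((f' x*(1-k*x) + f x*(0-k*1))*x - f x*(1-k*x)*1)/(x*x)
      = (x*(1-k*x)*f' x - f x)/x^2" by (simp add: algebra_simps power2_eq_square)
  ultimately show ?thesis by simp
qed

lemma key:
  fixes k L gamma b x0 :: real and f f' f'' :: "real \<Rightarrow> real"
  assumes kpos: "k > 0" and L: "L = 1/k"
    and f0: "f 0 = 0" and cont: "continuous_on {0..} f"
    and der: "\<forall>x>0. (f has_real_derivative f' x) (at x) \<and> (f' has_real_derivative f'' x) (at x)"
    and fpos: "\<forall>x>0. f' x > 0"
    and x0in: "x0 \<in> {0<..<L}"
    and x0a: "\<forall>x\<in>{0<..<x0}. f'' x / f' x - 2 * k / (1 - k * x) > 0"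
    and x0b: "\<forall>x\<in>{x0<..<L}. f'' x / f' x - 2 * k / (1 - k * x) < 0"
    and gin: "gamma \<in> {0<..<L}"
    and gsol: "gamma * (1 - k * gamma) * f' gamma - f gamma = 0"
    and guniq: "\<forall>x\<in>{0<..<L}. x * (1 - k * x) * f' x - f x = 0 \<longrightarrow> x = gamma"
    and bin: "b \<in> {0<..<L}"
    and bneg: "b * (1 - k * b) * f' b - f b < 0"
  shows "f b * (1 - k*b) / b \<le> f gamma * (1 - k*gamma) / gamma"
proof -
  define phi where "phi = (\<lambda>x. x*(1-k*x)*f' x - f x)"
  define h where "h = (\<lambda>x. f x*(1-k*x)/x)"
  have Lpos: "L > 0" using L kpos by simp
  have one: "1 - k*x > 0" if "x < L" for x
    using that L kpos by (simp add: field_simps)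
  have phider: "(phi has_real_derivative (x*(1-k*x)*f'' x - 2*k*x*f' x)) (at x)" if "x > 0" for x
    unfolding phi_def by (rule phi_deriv) (use der that in auto)
  have hder: "(h has_real_derivative (phi x / x^2)) (at x)" if "x > 0" for x
    unfolding h_def phi_def by (rule h_deriv) (use der that in auto)
  have phicont: "continuous_on {s..t} phi" if "0 < s" for s t
    using that by (intro continuous_at_imp_continuous_on ballI)
      (metis DERIV_isCont atLeastAtMost_iff order_less_le_trans phider)
  have hcont: "continuous_on {s..t} h" if "0 < s" for s t
    using that by (intro continuous_at_imp_continuous_on ballI)
      (metis DERIV_isCont atLeastAtMost_iff order_less_le_trans hder)
  have dpos: "x*(1-k*x)*f'' x - 2*k*x*f' x > 0" if "0 < x" "x < x0" for x
  proof -
    have A: "f'' x / f' x - 2 * k / (1 - k * x) > 0" using x0a that by auto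
    have p: "x*(1-k*x)*f' x > 0" using that one[of x] x0in fpos by auto
    have "x*(1-k*x)*f' x * (f'' x / f' x - 2 * k / (1 - k * x)) > 0" using A p by simp
    moreover have "x*(1-k*x)*f' x * (f'' x / f' x - 2 * k / (1 - k * x)) = x*(1-k*x)*f'' x - 2*k*x*f' x"
    proof -
      have "x > 0" using that x0in by auto
      then have nz1: "f' x \<noteq> 0" using fpos by (metis less_irrefl)
      have nz: "f' x \<noteq> 0" "1 - k*x \<noteq> 0" using nz1 that one[of x] x0in by auto
      have e: "x*(1-k*x)*f' x * (2 * k / (1 - k * x)) = 2*k*x*f' x" using nz by simp
      show ?thesis using nz e by (simp add: right_diff_distrib)
    qed
    ultimately show ?thesis by simp
  qed
  have dneg: "x*(1-k*x)*f'' x - 2*k*x*f' x < 0" if "x0 < x" "x < L" for x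
  proof -
    have A: "f'' x / f' x - 2 * k / (1 - k * x) < 0" using x0b that by auto
    have p: "x*(1-k*x)*f' x > 0" using that one[of x] x0in fpos by auto
    have "x*(1-k*x)*f' x * (f'' x / f' x - 2 * k / (1 - k * x)) < 0" using A p
      by (simp add: mult_pos_neg)
    moreover have "x*(1-k*x)*f' x * (f'' x / f' x - 2 * k / (1 - k * x)) = x*(1-k*x)*f'' x - 2*k*x*f' x"
    proof -
      have "x > 0" using that x0in by auto
      then have nz1: "f' x \<noteq> 0" using fpos by (metis less_irrefl)
      have nz: "f' x \<noteq> 0" "1 - k*x \<noteq> 0" using nz1 that one[of x] x0in by auto
      have e: "x*(1-k*x)*f' x * (2 * k / (1 - k * x)) = 2*k*x*f' x" using nz by simp
      show ?thesis using nz e by (simp add: right_diff_distrib)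
    qed
    ultimately show ?thesis by simp
  qed
  have inc: "phi s < phi t" if "0 < s" "s < t" "t \<le> x0" for s t
  proof (rule DERIV_pos_imp_increasing_open[OF \<open>s<t\<close>])
    fix x assume x: "s < x" "x < t"
    have "0 < x" "x < x0" using x that by auto
    then show "\<exists>y. (phi has_real_derivative y) (at x) \<and> 0 < y"
      using phider[of x] dpos[of x] by blast
  qed (use phicont that in auto)
  have dec: "phi s > phi t" if "x0 \<le> s" "s < t" "t < L" for s t
  proof (rule DERIV_neg_imp_decreasing_open[OF \<open>s<t\<close>])
    fix x assume x: "s < x" "x < t"
    have "0 < x" "x0 < x" "x < L" using x that x0in by auto
    then show "\<exists>y. (phi has_real_derivative y) (at x) \<and> y < 0"
      using phider[of x] dneg[of x] by blast
  qed (use phicont that x0in in auto)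
  have g0: "phi gamma = 0" using gsol phi_def by simp
  have ftend: "(f \<longlongrightarrow> 0) (at_right 0)"
  proof -
    have "(f \<longlongrightarrow> f 0) (at 0 within {0..})"
      using cont by (simp add: continuous_on_def)
    then have "(f \<longlongrightarrow> f 0) (at 0 within {0<..})"
      by (rule tendsto_within_subset) auto
    then show ?thesis using f0 by simp
  qed
  have phipos: "phi x > 0" if "0 < x" "x < gamma" for x
  proof (rule ccontr)
    assume "\<not> phi x > 0"
    moreover have "phi x \<noteq> 0" using guniq that gin unfolding phi_def by auto
    ultimately have neg: "phi x < 0" by simp
    show False
    proof (cases "x < x0")
      case False
      then have "phi gamma < phi x" using dec[of x gamma] that gin by auto
      then show False using g0 neg by simp
    next
      case True
      have "\<forall>\<^sub>F t in at_right 0. f t < - phi x"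
      proof -
        have "\<forall>\<^sub>F t in at_right 0. \<bar>f t\<bar> < - phi x"
          using ftend neg by (auto simp: tendsto_iff dist_real_def dest!: spec[of _ "- phi x"])
        then show ?thesis by (rule eventually_mono) auto
      qed
      moreover have "\<forall>\<^sub>F t in at_right 0. t < x"
        using eventually_at_right_real[of 0 x] that(1) by (auto elim!: eventually_mono)
      moreover have "\<forall>\<^sub>F t in at_right (0::real). t > 0"
        by (rule eventually_at_right_less)
      ultimately have "\<forall>\<^sub>F t in at_right (0::real). False"
      proof eventually_elim
        case (elim t)
        have "phi t \<le> phi x"
          using inc[of t x] elim True by (cases "t = x") auto
        moreover have "t*(1-k*t)*f' t > 0" using elim one[of t] that gin fpos by auto
        ultimately show False using elim unfolding phi_def by simp
      qed
      then show False by simp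
    qed
  qed
  have bneg': "phi b < 0" using bneg phi_def by simp
  have gb: "gamma < b"
  proof (rule ccontr)
    assume "\<not> gamma < b"
    then have "b \<le> gamma" by simp
    then show False using phipos[of b] g0 bneg' bin by (cases "b = gamma") auto
  qed
  have phineg: "phi x < 0" if xx: "gamma < x" "x \<le> b" for x
  proof (rule ccontr)
    assume "\<not> phi x < 0"
    then have "0 \<le> phi x" by simp
    then obtain z where z: "x \<le> z" "z \<le> b" "phi z = 0"
      using IVT2'[of phi b 0 x] bneg' phicont[of x b] xx gin by auto
    then have "z = gamma" using guniq xx bin gin unfolding phi_def by auto
    then show False using z xx by simp
  qed
  have "h gamma > h b"
  proof (rule DERIV_neg_imp_decreasing_open[OF gb])
    fix x assume x: "gamma < x" "x < b"
    have "0 < x" using x gin by auto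
    moreover have "phi x < 0" using phineg[of x] x by simp
    ultimately have "phi x / x^2 < 0" by (simp add: divide_neg_pos)
    then show "\<exists>y. (h has_real_derivative y) (at x) \<and> y < 0"
      using hder[OF \<open>0 < x\<close>] by blast
  qed (use hcont gin in auto)
  then show ?thesis unfolding h_def by simp
qed

lemma util_eq:
  fixes K :: nat and s2 x :: real and g :: "nat \<Rightarrow> complex" and p R :: "nat \<Rightarrow> real"
  assumes s2: "s2 > 0" and g: "\<forall>i\<in>{1..K}. (cmod (g i))\<^sup>2 > 0"
    and x: "0 < x" "(real K - 1) * x < 1" and K: "K \<ge> 1"
    and p: "\<forall>i. p i = s2 / (cmod (g i))\<^sup>2 * (x / (1 - (real K - 1) * x))"
    and i: "i \<in> {1..K}"
  shows "utility K s2 g R f p i = R i * (cmod (g i))\<^sup>2 / s2 * (f x * (1 - (real K - 1) * x) / x)"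
proof -
  define c where "c = x / (1 - (real K - 1) * x)"
  have d: "1 - (real K - 1) * x > 0" using x by simp
  have cpos: "c > 0" using d x c_def by simp
  have pj: "p j * (cmod (g j))\<^sup>2 = s2 * c" if "j \<in> {1..K}" for j
    using p g that c_def by auto
  have "(\<Sum>j\<in>{1..K} - {i}. p j * (cmod (g j))\<^sup>2) = (\<Sum>j\<in>{1..K} - {i}. s2 * c)"
    by (rule sum.cong) (auto simp: pj)
  also have "\<dots> = (real K - 1) * (s2 * c)"
    using i K by (simp add: card_Diff_singleton of_nat_diff)
  finally have S: "(\<Sum>j\<in>{1..K} - {i}. p j * (cmod (g j))\<^sup>2) = (real K - 1) * (s2 * c)" .
  have "SINR K s2 g p i = s2 * c / ((real K - 1) * (s2 * c) + s2)"
    unfolding SINR_def S using pj[OF i] by simp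
  also have "\<dots> = (s2 * c) / (s2 * ((real K - 1) * c + 1))"
    by (simp add: algebra_simps)
  also have "\<dots> = c / ((real K - 1) * c + 1)"
    using s2 by simp
  also have "\<dots> = x" unfolding c_def using d by (simp add: field_simps)
  finally have sinr: "SINR K s2 g p i = x" .
  have gi: "(cmod (g i))\<^sup>2 > 0" using g i by auto
  have "R i * f x / (s2 / (cmod (g i))\<^sup>2 * (x / (1 - (real K - 1) * x)))
      = R i * (cmod (g i))\<^sup>2 / s2 * (f x * (1 - (real K - 1) * x) / x)"
    using gi s2 d x by (simp add: divide_simps)
  then show ?thesis unfolding utility_def sinr p[rule_format] .
qed

theorem proposition7:
  fixes K :: nat and s2 :: real and g :: "nat \<Rightarrow> complex" and R Pmax :: "nat \<Rightarrow> real"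
    and f f' f'' :: "real \<Rightarrow> real" and beta gamma :: real and pstar ptilde :: "nat \<Rightarrow> real"
  assumes K2: "K \<ge> 2"
    and s2: "s2 > 0"
    and g: "\<forall>i\<in>{1..K}. (cmod (g i))\<^sup>2 > 0"
    and R: "\<forall>i\<in>{1..K}. R i > 0"
    and sig: "sigmoidal f f' f''"
    and beta_pos: "beta > 0"
    and beta_sol: "beta * f' beta - f beta = 0"
    and beta_uniq: "\<forall>x>0. x * f' x - f x = 0 \<longrightarrow> x = beta"
    and beta_small: "(real K - 1) * beta < 1"
    and x0: "\<exists>x0\<in>{0<..<1 / (real K - 1)}.
              (\<forall>x\<in>{0<..<x0}. f'' x / f' x - 2 * (real K - 1) / (1 - (real K - 1) * x) > 0) \<and>
              (\<forall>x\<in>{x0<..<1 / (real K - 1)}. f'' x / f' x - 2 * (real K - 1) / (1 - (real K - 1) * x) < 0)"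
    and gamma_in: "gamma \<in> {0<..<1 / (real K - 1)}"
    and gamma_sol: "gamma * (1 - (real K - 1) * gamma) * f' gamma - f gamma = 0"
    and gamma_uniq: "\<forall>x\<in>{0<..<1 / (real K - 1)}.
                       x * (1 - (real K - 1) * x) * f' x - f x = 0 \<longrightarrow> x = gamma"
    and pstar_def: "\<forall>i. pstar i = s2 / (cmod (g i))\<^sup>2 * (beta / (1 - (real K - 1) * beta))"
    and ptilde_def: "\<forall>i. ptilde i = s2 / (cmod (g i))\<^sup>2 * (gamma / (1 - (real K - 1) * gamma))"
    and Pmax: "\<forall>i\<in>{1..K}. pstar i \<le> Pmax i \<and> ptilde i \<le> Pmax i"
  shows "\<forall>i\<in>{1..K}. utility K s2 g R f ptilde i \<ge> utility K s2 g R f pstar i"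
proof
  fix i assume i: "i \<in> {1..K}"
  define k where "k = real K - 1"
  have kpos: "k > 0" using K2 k_def by simp
  from sig have f0: "f 0 = 0" and cont: "continuous_on {0..} f"
    and der: "\<forall>x>0. (f has_real_derivative f' x) (at x) \<and> (f' has_real_derivative f'' x) (at x)"
    and fpos: "\<forall>x>0. f' x > 0"
    unfolding sigmoidal_def by blast+
  from x0 obtain x0 where x0in: "x0 \<in> {0<..<1/k}"
    and x0a: "\<forall>x\<in>{0<..<x0}. f'' x / f' x - 2 * k / (1 - k * x) > 0"
    and x0b: "\<forall>x\<in>{x0<..<1/k}. f'' x / f' x - 2 * k / (1 - k * x) < 0"
    unfolding k_def by blast
  have kb: "k * beta < 1" using beta_small k_def by simp
  have bin: "beta \<in> {0<..<1/k}" using beta_pos kb kpos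
    by (simp add: pos_less_divide_eq mult.commute)
  have "beta * (1 - k * beta) * f' beta - f beta = (beta * f' beta - f beta) - k * beta^2 * f' beta"
    by (simp add: algebra_simps power2_eq_square)
  also have "\<dots> < 0" using beta_sol kpos beta_pos fpos by simp
  finally have bneg: "beta * (1 - k * beta) * f' beta - f beta < 0" .
  have g1: "gamma \<in> {0<..<1/k}" using gamma_in unfolding k_def .
  have g2: "gamma*(1-k*gamma)*f' gamma - f gamma = 0" using gamma_sol unfolding k_def .
  have g3: "\<forall>x\<in>{0<..<1/k}. x * (1 - k * x) * f' x - f x = 0 \<longrightarrow> x = gamma"
    using gamma_uniq unfolding k_def .
  have ineq: "f beta * (1 - k*beta) / beta \<le> f gamma * (1 - k*gamma) / gamma"
    by (rule key[OF kpos refl f0 cont der fpos x0in x0a x0b g1 g2 g3 bin bneg])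
  have gin: "0 < gamma" "k * gamma < 1" using gamma_in kpos
    by (simp_all add: k_def[symmetric] pos_less_divide_eq mult.commute)
  have u1: "utility K s2 g R f ptilde i = R i * (cmod (g i))\<^sup>2 / s2 * (f gamma * (1 - k * gamma) / gamma)"
    unfolding k_def by (rule util_eq[OF s2 g _ _ _ ptilde_def i]) (use gin k_def K2 in auto)
  have u2: "utility K s2 g R f pstar i = R i * (cmod (g i))\<^sup>2 / s2 * (f beta * (1 - k * beta) / beta)"
    unfolding k_def by (rule util_eq[OF s2 g _ _ _ pstar_def i]) (use beta_pos beta_small K2 in auto)
  have "R i > 0" "(cmod (g i))\<^sup>2 > 0" using R g i by auto
  then have "R i * (cmod (g i))\<^sup>2 / s2 \<ge> 0" using s2 by simp
  then show "utility K s2 g R f ptilde i \<ge> utility K s2 g R f pstar i"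
    unfolding u1 u2 by (rule mult_left_mono[OF ineq])
qed

end
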